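(* Let $\mathcal{X}$ be a finite alphabet with $|\mathcal{X}|=q$, let $P_0,P_1$ be probability mass functions on $\mathcal{X}$ with the same support $\mathcal{X}$, let $\varepsilon>0$, $n>1$, $k^\star\in(1,n]$, and let $\mathcal{D}=(x_1,\dots,x_n)$ have independent entries with $x_1,\dots,x_{k^\star-1}\sim P_0$ and $x_{k^\star},\dots,x_n\sim P_1$. The Offline RR-CPD estimator passes each $x_i$ independently through the randomized response mechanism $W^r$ to obtain $y_i$, lets $Q_j(y)=\sum_xP_j(x)W^r(y|x)$ ($j=0,1$), and outputs $\hat k\in\arg\max_{k\in[n]}\sum_{i=k}^n\log\frac{Q_1(y_i)}{Q_0(y_i)}$. Then this estimator is $\varepsilon$-locally differentially private and, for any $\alpha\in[n]$, $(\alpha,\beta_r)$-accurate with $$\beta_r\le2\min\Bigg\{\sum_{i=1}^{i^*}\exp\Big(\frac{-2^{i-1}\alpha C_r^2}{s_r^2}\Big);\ \Big(1-\frac{C_r}{2}\Big)^{\alpha/2}\Bigg\},$$ where $s_r=\min\{2\varepsilon;\ \tanh(\varepsilon/2)\,s\}$, $C_r=2\big(\frac{e^\varepsilon-1}{e^\varepsilon+q-1}\big)^2d_{\mathrm{TV}}^2(P_0,P_1)$, $s=\max_x\log\frac{P_1(x)}{P_0(x)}-\min_x\log\frac{P_1(x)}{P_0(x)}$, $i^*=\lceil\log_2(\frac{n-1}{\alpha})\rceil$, and $\tanh(\varepsilon/2)=\frac{e^\varepsilon-1}{e^\varepsilon+1}$.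
   Context: Randomized response: $W^r(y|x)=\frac{e^\varepsilon}{e^\varepsilon+q-1}$ if $y=x$ and $\frac{1}{e^\varepsilon+q-1}$ if $y\ne x$ (output alphabet $\mathcal{X}$). A procedure is $\varepsilon$-LDP if each data point is released through a mechanism $W$ with $W(S|x)\le e^\varepsilon W(S|x')$ for all $x,x'$ and output sets $S$. $(\alpha,\beta)$-accurate means $\mathbb{P}\{\hat k\notin[k^\star-\alpha,k^\star+\alpha]\}=\beta$. $d_{\mathrm{TV}}(P_0,P_1)=\frac12\sum_x|P_0(x)-P_1(x)|$. $[a]=\{1,\dots,a\}$; natural logarithms. *)

theory Defs
  imports "HOL-Probability.Probability"
begin

definition rr :: "real \<Rightarrow> 'a::finite \<Rightarrow> 'a pmf" where
  "rr \<epsilon> x = embed_pmf (\<lambda>y. if y = x then exp \<epsilon> / (exp \<epsilon> + real CARD('a) - 1)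
                              else 1 / (exp \<epsilon> + real CARD('a) - 1))"

definition ldp_mechanism :: "real \<Rightarrow> ('a \<Rightarrow> 'b pmf) \<Rightarrow> bool" where
  "ldp_mechanism \<epsilon> W \<longleftrightarrow>
     (\<forall>x x' S. measure_pmf.prob (W x) S \<le> exp \<epsilon> * measure_pmf.prob (W x') S)"

definition rr_out :: "real \<Rightarrow> 'a::finite pmf \<Rightarrow> 'a \<Rightarrow> real" where
  "rr_out \<epsilon> P y = (\<Sum>x\<in>UNIV. pmf P x * pmf (rr \<epsilon> x) y)"

definition cpd_score :: "real \<Rightarrow> 'a::finite pmf \<Rightarrow> 'a pmf \<Rightarrow> nat \<Rightarrow> (nat \<Rightarrow> 'a) \<Rightarrow> nat \<Rightarrow> real" where
  "cpd_score \<epsilon> P0 P1 n y k = (\<Sum>i\<in>{k..n}. ln (rr_out \<epsilon> P1 (y i) / rr_out \<epsilon> P0 (y i)))"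

definition cp_data :: "nat \<Rightarrow> nat \<Rightarrow> 'a pmf \<Rightarrow> 'a pmf \<Rightarrow> (nat \<Rightarrow> 'a) pmf" where
  "cp_data n kstar P0 P1 = Pi_pmf {1..n} undefined (\<lambda>i. if i < kstar then P0 else P1)"

definition privatize :: "nat \<Rightarrow> ('a \<Rightarrow> 'b pmf) \<Rightarrow> (nat \<Rightarrow> 'a) pmf \<Rightarrow> (nat \<Rightarrow> 'b) pmf" where
  "privatize n W D = bind_pmf D (\<lambda>x. Pi_pmf {1..n} undefined (\<lambda>i. W (x i)))"

definition tv_dist :: "'a::finite pmf \<Rightarrow> 'a pmf \<Rightarrow> real" where
  "tv_dist P0 P1 = (1/2) * (\<Sum>x\<in>UNIV. \<bar>pmf P0 x - pmf P1 x\<bar>)"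

definition llr_span :: "'a::finite pmf \<Rightarrow> 'a pmf \<Rightarrow> real" where
  "llr_span P0 P1 = Max (range (\<lambda>x. ln (pmf P1 x / pmf P0 x)))
                  - Min (range (\<lambda>x. ln (pmf P1 x / pmf P0 x)))"

end

theory Submission
  imports Defs
begin

lemma prob_bind_finite:
  fixes Q :: "'a::finite pmf" and f :: "'a \<Rightarrow> 'b pmf"
  shows "measure_pmf.prob (bind_pmf Q f) S = (\<Sum>v\<in>UNIV. pmf Q v * measure_pmf.prob (f v) S)"
proof -
  have "measure_pmf.prob (bind_pmf Q f) S = (\<integral>v. measure_pmf.prob (f v) S \<partial>measure_pmf Q)"
    unfolding measure_pmf_bind
    by (rule measure_pmf.measure_bind[where N = "count_space UNIV"])
       (auto simp: measurable_def space_subprob_algebra sets_measure_pmf_count_space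
             measure_pmf_in_subprob_space subprob_space_measure_pmf)
  also have "\<dots> = (\<Sum>v\<in>UNIV. measure_pmf.prob (f v) S * pmf Q v)"
    by (rule integral_measure_pmf_real) auto
  finally show ?thesis by (simp add: mult.commute)
qed

lemma N_pos: "exp (\<epsilon>::real) + real CARD('a::finite) - 1 > 0"
proof -
  have "CARD('a) \<ge> 1" using zero_less_card_finite[where 'a='a] by (simp add: Suc_le_eq)
  then have "real CARD('a) \<ge> 1" by simp
  then show ?thesis using exp_gt_zero[of \<epsilon>] by linarith
qed

lemma rr_pmf:
  fixes x y :: "'a::finite"
  shows "pmf (rr \<epsilon> x) y = (if y = x then exp \<epsilon> / (exp \<epsilon> + real CARD('a) - 1) else 1 / (exp \<epsilon> + real CARD('a) - 1))"
  unfolding rr_def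
proof (rule pmf_embed_pmf)
  let ?N = "exp \<epsilon> + real CARD('a) - 1"
  have N: "?N > 0" by (rule N_pos)
  show "\<And>y. 0 \<le> (if y = x then exp \<epsilon> / ?N else 1 / ?N)" using N by auto
  have "(\<Sum>y\<in>UNIV. (if y = x then exp \<epsilon> / ?N else 1 / ?N)) = exp \<epsilon> / ?N + (\<Sum>y\<in>UNIV-{x}. 1 / ?N)"
    by (subst sum.remove[of _ x]) auto
  also have "\<dots> = exp \<epsilon> / ?N + (real CARD('a) - 1) / ?N"
    by (simp add: card_Diff_singleton of_nat_diff)
  also have "\<dots> = (exp \<epsilon> + real CARD('a) - 1) / ?N" by (simp add: add_divide_distrib[symmetric])
  also have "\<dots> = 1" using N by simp
  finally have s: "(\<Sum>y\<in>UNIV. (if y = x then exp \<epsilon> / ?N else 1 / ?N)) = 1" .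
  have "(\<Sum>y\<in>UNIV. ennreal (if y = x then exp \<epsilon> / ?N else 1 / ?N)) = ennreal (\<Sum>y\<in>UNIV. (if y = x then exp \<epsilon> / ?N else 1 / ?N))"
    by (rule sum_ennreal) (use N in auto)
  then show "(\<integral>\<^sup>+ y. ennreal (if y = x then exp \<epsilon> / ?N else 1 / ?N) \<partial>count_space UNIV) = 1"
    using s by (simp add: nn_integral_count_space_finite)
qed

lemma rr_ldp:
  assumes "\<epsilon> > 0"
  shows "ldp_mechanism \<epsilon> (rr \<epsilon> :: 'a::finite \<Rightarrow> 'a pmf)"
  unfolding ldp_mechanism_def
proof (intro allI)
  fix x x' :: 'a and S :: "'a set"
  let ?N = "exp \<epsilon> + real CARD('a) - 1"
  have N: "?N > 0" by (rule N_pos)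
  have E: "exp \<epsilon> \<ge> 1" using assms by simp
  have pt: "pmf (rr \<epsilon> x) y \<le> exp \<epsilon> * pmf (rr \<epsilon> x') y" for y
  proof -
    have "pmf (rr \<epsilon> x) y \<le> exp \<epsilon> / ?N" using N E by (auto simp: rr_pmf divide_right_mono)
    also have "\<dots> = exp \<epsilon> * (1 / ?N)" by simp
    also have "\<dots> \<le> exp \<epsilon> * pmf (rr \<epsilon> x') y"
      using N E by (auto simp: rr_pmf divide_right_mono intro!: mult_left_mono)
    finally show ?thesis .
  qed
  show "measure_pmf.prob (rr \<epsilon> x) S \<le> exp \<epsilon> * measure_pmf.prob (rr \<epsilon> x') S"
    by (simp add: measure_measure_pmf_finite sum_distrib_left sum_mono pt)
qed

lemma aux_split: "(N::real) \<noteq> 0 \<Longrightarrow> a * (if y = x then E/N else 1/N) = a/N + (if x = y then a*(E-1)/N else 0)"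
  by (auto simp: field_simps)

lemma rr_out_pmf:
  fixes P :: "'a::finite pmf"
  shows "pmf (bind_pmf P (rr \<epsilon>)) y = rr_out \<epsilon> P y"
    and "rr_out \<epsilon> P y = (1 + (exp \<epsilon> - 1) * pmf P y) / (exp \<epsilon> + real CARD('a) - 1)"
proof -
  let ?N = "exp \<epsilon> + real CARD('a) - 1"
  have N: "?N > 0" by (rule N_pos)
  have "pmf (bind_pmf P (rr \<epsilon>)) y = (\<Sum>x\<in>UNIV. pmf (rr \<epsilon> x) y * pmf P x)"
    unfolding pmf_bind by (rule integral_measure_pmf_real) auto
  then show "pmf (bind_pmf P (rr \<epsilon>)) y = rr_out \<epsilon> P y"
    by (simp add: rr_out_def mult.commute)
  have "rr_out \<epsilon> P y = (\<Sum>x\<in>UNIV. pmf P x / ?N + (if x = y then pmf P x * (exp \<epsilon> - 1) / ?N else 0))"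
    unfolding rr_out_def rr_pmf using N by (intro sum.cong) (auto simp: aux_split)
  also have "\<dots> = (\<Sum>x\<in>UNIV. pmf P x) / ?N + pmf P y * (exp \<epsilon> - 1) / ?N"
    by (simp add: sum.distrib sum_divide_distrib)
  also have "(\<Sum>x\<in>UNIV. pmf P x) = 1" by (simp add: sum_pmf_eq_1)
  also have "1 / ?N + pmf P y * (exp \<epsilon> - 1) / ?N = (1 + (exp \<epsilon> - 1) * pmf P y) / ?N"
    using N by (simp add: add_divide_distrib mult.commute)
  finally show "rr_out \<epsilon> P y = (1 + (exp \<epsilon> - 1) * pmf P y) / ?N" .
qed

lemma privatize_eq:
  "privatize n (rr \<epsilon>) (cp_data n kstar P0 P1) =
     Pi_pmf {1..n} undefined (\<lambda>i. if i < kstar then bind_pmf P0 (rr \<epsilon>) else bind_pmf P1 (rr \<epsilon>))"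
proof -
  have "Pi_pmf {1..n} undefined (\<lambda>i. bind_pmf (if i < kstar then P0 else P1) ((\<lambda>_. rr \<epsilon>) i)) =
        bind_pmf (Pi_pmf {1..n} undefined (\<lambda>i. if i < kstar then P0 else P1))
           (\<lambda>f. Pi_pmf {1..n} undefined (\<lambda>i. (\<lambda>_. rr \<epsilon>) i (f i)))"
    by (rule Pi_pmf_bind) simp
  moreover have "(\<lambda>i. bind_pmf (if i < kstar then P0 else P1) ((\<lambda>_. rr \<epsilon>) i)) =
      (\<lambda>i. if i < kstar then bind_pmf P0 (rr \<epsilon>) else bind_pmf P1 (rr \<epsilon>))" by auto
  ultimately show ?thesis unfolding privatize_def cp_data_def by simp
qed

lemma prod_shift_upd:
  assumes "m \<le> length is" "i \<notin> set is"
  shows "(\<Prod>j<Suc m. g ((f(i:=v)) ((i#is)!j))) = g v * (\<Prod>j<m. g (f (is!j)))"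
proof -
  have "(\<Prod>j<Suc m. g ((f(i:=v)) ((i#is)!j))) = g v * (\<Prod>j<m. g ((f(i:=v)) (is!j)))"
    by (subst prod.lessThan_Suc_shift) simp
  also have "(\<Prod>j<m. g ((f(i:=v)) (is!j))) = (\<Prod>j<m. g (f (is!j)))"
  proof (rule prod.cong)
    fix j assume "j \<in> {..<m}"
    then have "is ! j \<in> set is" using assms(1) by auto
    then have "is ! j \<noteq> i" using assms(2) by auto
    then show "g ((f(i:=v)) (is!j)) = g (f (is!j))" by simp
  qed simp
  finally show ?thesis .
qed

lemma maximal_ineq:
  fixes p :: "nat \<Rightarrow> 'a::finite pmf" and Q :: "'a pmf" and g :: "'a \<Rightarrow> real"
  assumes "finite A" "distinct is" "set is \<subseteq> A" "\<forall>i\<in>set is. p i = Q"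
    and g_nn: "\<And>v. g v \<ge> 0" and rho: "(\<Sum>v\<in>UNIV. pmf Q v * g v) \<le> 1"
    and c: "c > 0" and w: "w \<ge> 0"
  shows "measure_pmf.prob (Pi_pmf A d p)
           {y. \<exists>m. a \<le> m \<and> m \<le> length is \<and> c \<le> w * (\<Prod>j<m. g (y (is!j)))}
         \<le> w * (\<Sum>v\<in>UNIV. pmf Q v * g v)^a / c"
  using assms(1-4) w
proof (induction "is" arbitrary: A a w)
  case Nil
  let ?S = "{y. \<exists>m. a \<le> m \<and> m \<le> length ([]::nat list) \<and> c \<le> w * (\<Prod>j<m. g (y ([]!j)))}"
  show ?case
  proof (cases "a = 0 \<and> c \<le> w")
    case True
    have "measure_pmf.prob (Pi_pmf A d p) ?S \<le> 1" by (rule measure_pmf.prob_le_1)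
    also have "1 \<le> w / c" using True c by simp
    finally show ?thesis using True by simp
  next
    case False
    then have "?S = {}" by auto
    then show ?thesis using Nil.prems c g_nn
      by (auto intro!: divide_nonneg_pos mult_nonneg_nonneg sum_nonneg zero_le_power)
  qed
next
  case (Cons i "is" A a w)
  let ?\<rho> = "\<Sum>v\<in>UNIV. pmf Q v * g v"
  have \<rho>0: "?\<rho> \<ge> 0" using g_nn by (auto intro: sum_nonneg)
  have iA: "i \<in> A" and notin: "i \<notin> set is" and dist: "distinct is" and sub: "set is \<subseteq> A - {i}"
    using Cons.prems by auto
  have pi: "p i = Q" using Cons.prems by auto
  have finA: "finite (A - {i})" using Cons.prems by auto
  define R where "R = Pi_pmf (A - {i}) d p"
  have "Pi_pmf A d p = Pi_pmf (insert i (A - {i})) d p" using iA by (simp add: insert_absorb)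
  also have "\<dots> = bind_pmf Q (\<lambda>v. map_pmf (\<lambda>f. f(i := v)) R)"
    using finA by (subst Pi_pmf_insert') (auto simp: R_def pi map_pmf_def)
  finally have PiA: "Pi_pmf A d p = bind_pmf Q (\<lambda>v. map_pmf (\<lambda>f. f(i := v)) R)" .
  let ?S = "\<lambda>a w. {y. \<exists>m. a \<le> m \<and> m \<le> length is \<and> c \<le> w * (\<Prod>j<m. g (y (is!j)))}"
  let ?T = "{y. \<exists>m. a \<le> m \<and> m \<le> length (i#is) \<and> c \<le> w * (\<Prod>j<m. g (y ((i#is)!j)))}"
  show ?case
  proof (cases "a = 0 \<and> c \<le> w")
    case True
    have "measure_pmf.prob (Pi_pmf A d p) ?T \<le> 1" by (rule measure_pmf.prob_le_1)
    also have "1 \<le> w / c" using True c by simp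
    finally show ?thesis using True by simp
  next
    case False
    have pre: "(\<lambda>f. f(i:=v)) -` ?T = ?S (a - 1) (w * g v)" for v
    proof (intro set_eqI iffI)
      fix f assume "f \<in> (\<lambda>f. f(i:=v)) -` ?T"
      then obtain m where m: "a \<le> m" "m \<le> Suc (length is)"
        "c \<le> w * (\<Prod>j<m. g ((f(i:=v)) ((i#is)!j)))" by auto
      show "f \<in> ?S (a - 1) (w * g v)"
      proof (cases m)
        case 0
        then show ?thesis using m False by auto
      next
        case (Suc m')
        then have "c \<le> w * (g v * (\<Prod>j<m'. g (f (is!j))))"
          using m prod_shift_upd[of m' "is" i g f v] notin by simp
        then show ?thesis using m Suc by (auto simp: mult.assoc intro!: exI[of _ m'])
      qed
    next
      fix f assume "f \<in> ?S (a - 1) (w * g v)"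
      then obtain m' where m': "a - 1 \<le> m'" "m' \<le> length is" "c \<le> w * g v * (\<Prod>j<m'. g (f (is!j)))"
        by auto
      have "c \<le> w * (\<Prod>j<Suc m'. g ((f(i:=v)) ((i#is)!j)))"
        using m' prod_shift_upd[of m' "is" i g f v] notin by (simp add: mult.assoc)
      then show "f \<in> (\<lambda>f. f(i:=v)) -` ?T" using m' by (auto intro!: exI[of _ "Suc m'"])
    qed
    have "measure_pmf.prob (Pi_pmf A d p) ?T
          = (\<Sum>v\<in>UNIV. pmf Q v * measure_pmf.prob (map_pmf (\<lambda>f. f(i := v)) R) ?T)"
      unfolding PiA by (rule prob_bind_finite)
    also have "\<dots> = (\<Sum>v\<in>UNIV. pmf Q v * measure_pmf.prob R (?S (a - 1) (w * g v)))"
      by (simp only: measure_map_pmf pre)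
    also have "\<dots> \<le> (\<Sum>v\<in>UNIV. pmf Q v * (w * g v * ?\<rho>^(a-1) / c))"
    proof (rule sum_mono, rule mult_left_mono)
      fix v
      show "measure_pmf.prob R (?S (a - 1) (w * g v)) \<le> w * g v * ?\<rho>^(a-1) / c"
        unfolding R_def
        by (rule Cons.IH[OF finA dist sub]) (use Cons.prems g_nn in auto)
    qed simp
    also have "\<dots> = w * ?\<rho> * ?\<rho>^(a-1) / c"
      by (simp add: sum_divide_distrib sum_distrib_left sum_distrib_right mult_ac)
    also have "\<dots> \<le> w * ?\<rho>^a / c"
    proof (cases a)
      case 0
      have "w * ?\<rho> \<le> w * 1" using rho Cons.prems by (intro mult_left_mono) auto
      then show ?thesis using 0 c by (simp add: divide_right_mono)
    next
      case (Suc a')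
      then show ?thesis by (simp add: mult_ac)
    qed
    finally show ?thesis .
  qed
qed

lemma hoeffding_finite:
  fixes Q :: "'a::finite pmf" and f :: "'a \<Rightarrow> real"
  assumes bnd: "\<And>v. lo \<le> f v \<and> f v \<le> hi" and l: "l > 0"
  shows "(\<Sum>v\<in>UNIV. pmf Q v * exp (l * (f v - (\<Sum>u\<in>UNIV. pmf Q u * f u)))) \<le> exp (l^2 * (hi - lo)^2 / 8)"
proof -
  interpret interval_bounded_random_variable "measure_pmf Q" f lo hi
    by unfold_locales (auto simp: bnd)
  have E: "measure_pmf.expectation Q f = (\<Sum>u\<in>UNIV. pmf Q u * f u)"
    by (subst integral_measure_pmf_real[of UNIV]) (auto simp: mult.commute)
  have H: "(\<integral>\<^sup>+x. ennreal (exp (l * (f x - measure_pmf.expectation Q f))) \<partial>measure_pmf Q)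
          \<le> ennreal (exp (l^2 * (hi - lo)^2 / 8))"
    by (rule Hoeffdings_lemma_nn_integral[OF l])
  have "(\<integral>\<^sup>+x. ennreal (exp (l * (f x - measure_pmf.expectation Q f))) \<partial>measure_pmf Q)
      = (\<Sum>x\<in>UNIV. ennreal (exp (l * (f x - measure_pmf.expectation Q f))) * ennreal (pmf Q x))"
    by (rule nn_integral_measure_pmf_support) auto
  also have "\<dots> = ennreal (\<Sum>x\<in>UNIV. pmf Q x * exp (l * (f x - measure_pmf.expectation Q f)))"
    by (subst sum_ennreal[symmetric]) (auto simp: ennreal_mult' mult.commute)
  finally have "ennreal (\<Sum>x\<in>UNIV. pmf Q x * exp (l * (f x - measure_pmf.expectation Q f)))
      \<le> ennreal (exp (l^2 * (hi - lo)^2 / 8))" using H by simp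
  then show ?thesis unfolding E by (simp add: ennreal_le_iff)
qed

lemma tail_B:
  fixes p :: "nat \<Rightarrow> 'a::finite pmf" and Q :: "'a pmf" and h :: "'a \<Rightarrow> real"
  assumes "finite A" "distinct is" "set is \<subseteq> A" "\<forall>i\<in>set is. p i = Q"
    and rho: "(\<Sum>v\<in>UNIV. pmf Q v * exp (- h v / 2)) \<le> 1"
  shows "measure_pmf.prob (Pi_pmf A d p) {y. \<exists>m. a \<le> m \<and> m \<le> length is \<and> (\<Sum>j<m. h (y (is!j))) \<le> 0}
         \<le> (\<Sum>v\<in>UNIV. pmf Q v * exp (- h v / 2))^a"
proof -
  have eq: "(\<Prod>j<m. exp (- h (y (is!j)) / 2)) = exp (- (\<Sum>j<m. h (y (is!j))) / 2)" for y m
    by (simp add: exp_sum[symmetric] sum_negf sum_divide_distrib)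
  have sub: "{y. \<exists>m. a \<le> m \<and> m \<le> length is \<and> (\<Sum>j<m. h (y (is!j))) \<le> 0}
     \<subseteq> {y. \<exists>m. a \<le> m \<and> m \<le> length is \<and> 1 \<le> 1 * (\<Prod>j<m. (\<lambda>v. exp (- h v / 2)) (y (is!j)))}"
    unfolding eq by auto
  have "measure_pmf.prob (Pi_pmf A d p) {y. \<exists>m. a \<le> m \<and> m \<le> length is \<and> (\<Sum>j<m. h (y (is!j))) \<le> 0}
     \<le> measure_pmf.prob (Pi_pmf A d p) {y. \<exists>m. a \<le> m \<and> m \<le> length is \<and> 1 \<le> 1 * (\<Prod>j<m. (\<lambda>v. exp (- h v / 2)) (y (is!j)))}"
    by (rule measure_pmf.finite_measure_mono[OF sub]) simp
  also have "\<dots> \<le> 1 * (\<Sum>v\<in>UNIV. pmf Q v * exp (- h v / 2))^a / 1"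
    by (rule maximal_ineq) (use assms in auto)
  finally show ?thesis by simp
qed

lemma tail_A:
  fixes p :: "nat \<Rightarrow> 'a::finite pmf" and Q :: "'a pmf" and h :: "'a \<Rightarrow> real"
  assumes "finite A" "distinct is" "set is \<subseteq> A" "\<forall>i\<in>set is. p i = Q"
    and bnd: "\<And>v. lo \<le> h v \<and> h v \<le> hi" and sr: "hi - lo \<le> sr" "sr > 0"
    and mu: "\<mu> = (\<Sum>v\<in>UNIV. pmf Q v * h v)" "\<mu> \<ge> 0"
  shows "measure_pmf.prob (Pi_pmf A d p) {y. \<exists>m. a \<le> m \<and> m \<le> length is \<and> (\<Sum>j<m. h (y (is!j))) \<le> 0}
         \<le> exp (- 2 * real a * \<mu>^2 / sr^2)"
proof (cases "\<mu> = 0")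
  case True
  then show ?thesis by (simp add: measure_pmf.prob_le_1)
next
  case False
  then have mpos: "\<mu> > 0" using mu by simp
  define l where "l = 4 * \<mu> / sr^2"
  have l: "l > 0" using mpos sr by (simp add: l_def)
  define g where "g v = exp (l * (- h v - (\<Sum>u\<in>UNIV. pmf Q u * (- h u))) - l^2 * sr^2 / 8)" for v
  have hb: "(\<Sum>v\<in>UNIV. pmf Q v * exp (l * (- h v - (\<Sum>u\<in>UNIV. pmf Q u * (- h u))))) \<le> exp (l^2 * (- lo - (- hi))^2 / 8)"
    by (rule hoeffding_finite[OF _ l]) (use bnd in auto)
  have "exp (l^2 * (- lo - (- hi))^2 / 8) \<le> exp (l^2 * sr^2 / 8)"
  proof -
    have "0 \<le> hi - lo" using bnd[of undefined] by auto
    then have "(hi - lo)^2 \<le> sr^2" using sr by (intro power_mono) auto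
    then have "l^2 * (hi - lo)^2 \<le> l^2 * sr^2" by (intro mult_left_mono) auto
    moreover have "(- lo - (- hi)) = hi - lo" by simp
    ultimately show ?thesis by simp
  qed
  with hb have hb2: "(\<Sum>v\<in>UNIV. pmf Q v * exp (l * (- h v - (\<Sum>u\<in>UNIV. pmf Q u * (- h u))))) \<le> exp (l^2 * sr^2 / 8)"
    by linarith
  have rho: "(\<Sum>v\<in>UNIV. pmf Q v * g v) \<le> 1"
  proof -
    have "(\<Sum>v\<in>UNIV. pmf Q v * g v) = (\<Sum>v\<in>UNIV. pmf Q v * exp (l * (- h v - (\<Sum>u\<in>UNIV. pmf Q u * (- h u))))) * exp (- (l^2 * sr^2 / 8))"
    proof -
      have "g v = exp (l * (- h v - (\<Sum>u\<in>UNIV. pmf Q u * (- h u)))) * exp (- (l^2 * sr^2 / 8))" for v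
        unfolding g_def exp_add[symmetric] by simp
      then show ?thesis by (simp add: sum_distrib_right mult.assoc)
    qed
    also have "\<dots> \<le> exp (l^2 * sr^2 / 8) * exp (- (l^2 * sr^2 / 8))"
      by (rule mult_right_mono[OF hb2]) simp
    also have "\<dots> = 1" by (simp flip: exp_add)
    finally show ?thesis .
  qed
  have negsum: "(\<Sum>u\<in>UNIV. pmf Q u * (- h u)) = - \<mu>" using mu by (simp add: sum_negf)
  have gen: "s > 0 \<Longrightarrow> (4*\<mu>/s) * \<mu> - (4*\<mu>/s)^2 * s / 8 = 2*\<mu>^2/s" for s
    by (simp add: field_simps power2_eq_square)
  have lmu: "l * \<mu> - l^2 * sr^2 / 8 = 2 * \<mu>^2 / sr^2"
    unfolding l_def using gen[of "sr^2"] sr by simp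
  define c where "c = exp (2 * real a * \<mu>^2 / sr^2)"
  have c: "c > 0" by (simp add: c_def)
  have sub: "{y. \<exists>m. a \<le> m \<and> m \<le> length is \<and> (\<Sum>j<m. h (y (is!j))) \<le> 0}
     \<subseteq> {y. \<exists>m. a \<le> m \<and> m \<le> length is \<and> c \<le> 1 * (\<Prod>j<m. g (y (is!j)))}"
  proof safe
    fix y m assume m: "a \<le> m" "m \<le> length is" "(\<Sum>j<m. h (y (is!j))) \<le> 0"
    have "(\<Prod>j<m. g (y (is!j))) = exp (\<Sum>j<m. l * (- h (y (is!j)) + \<mu>) - l^2 * sr^2 / 8)"
      by (simp add: exp_sum g_def sum_negf mu(1)[symmetric])
    also have "(\<Sum>j<m. l * (- h (y (is!j)) + \<mu>) - l^2 * sr^2 / 8)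
        = - l * (\<Sum>j<m. h (y (is!j))) + real m * (l * \<mu> - l^2 * sr^2 / 8)"
      by (simp add: sum.distrib sum_subtractf sum_distrib_left sum_negf algebra_simps)
    also have "\<dots> = - l * (\<Sum>j<m. h (y (is!j))) + real m * (2 * \<mu>^2 / sr^2)" by (simp add: lmu)
    finally have pe: "(\<Prod>j<m. g (y (is!j))) = exp (- l * (\<Sum>j<m. h (y (is!j))) + real m * (2 * \<mu>^2 / sr^2))" .
    have "2 * real a * \<mu>^2 / sr^2 \<le> real m * (2 * \<mu>^2 / sr^2)"
    proof -
      have "real a * (2 * \<mu>^2 / sr^2) \<le> real m * (2 * \<mu>^2 / sr^2)"
        using m(1) by (intro mult_right_mono) auto
      then show ?thesis by (simp add: mult_ac)
    qed
    also have "\<dots> \<le> - l * (\<Sum>j<m. h (y (is!j))) + real m * (2 * \<mu>^2 / sr^2)"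
      proof -
        have "0 \<le> l * (- (\<Sum>j<m. h (y (is!j))))" using m(3) l by (intro mult_nonneg_nonneg) auto
        then show ?thesis by simp
      qed
    finally have "c \<le> (\<Prod>j<m. g (y (is!j)))" unfolding pe c_def by simp
    then show "\<exists>m. a \<le> m \<and> m \<le> length is \<and> c \<le> 1 * (\<Prod>j<m. g (y (is!j)))" using m by auto
  qed
  have "measure_pmf.prob (Pi_pmf A d p) {y. \<exists>m. a \<le> m \<and> m \<le> length is \<and> (\<Sum>j<m. h (y (is!j))) \<le> 0}
     \<le> measure_pmf.prob (Pi_pmf A d p) {y. \<exists>m. a \<le> m \<and> m \<le> length is \<and> c \<le> 1 * (\<Prod>j<m. g (y (is!j)))}"
    by (rule measure_pmf.finite_measure_mono[OF sub]) simp
  also have "\<dots> \<le> 1 * (\<Sum>v\<in>UNIV. pmf Q v * g v)^a / c"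
    by (rule maximal_ineq) (use assms c rho in \<open>auto simp: g_def\<close>)
  also have "\<dots> \<le> 1 / c"
  proof -
    have "(\<Sum>v\<in>UNIV. pmf Q v * g v)^a \<le> 1"
      using rho by (intro power_le_one) (auto simp: g_def intro!: sum_nonneg)
    then show ?thesis using c by (simp add: divide_right_mono)
  qed
  also have "1 / c = exp (- (2 * real a * \<mu>^2 / sr^2))" by (simp add: c_def exp_minus')
  also have "\<dots> = exp (- 2 * real a * \<mu>^2 / sr^2)" by simp
  finally show ?thesis .
qed

lemma ln_ge_1_minus_inv: "x > 0 \<Longrightarrow> ln (x::real) \<ge> 1 - 1 / x"
proof -
  assume x: "x > 0"
  have "ln (1 / x) \<le> 1 / x - 1" using x by (intro ln_le_minus_one) auto
  moreover have "ln (1 / x) = - ln x" using x by (simp add: ln_div)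
  ultimately show ?thesis by simp
qed

lemma log_sum:
  fixes a b :: "'b \<Rightarrow> real"
  assumes fin: "finite B" and a: "\<forall>y\<in>B. a y > 0" and b: "\<forall>y\<in>B. b y > 0" and ne: "B \<noteq> {}"
  shows "(\<Sum>y\<in>B. a y * ln (a y / b y)) \<ge> (\<Sum>y\<in>B. a y) * ln ((\<Sum>y\<in>B. a y) / (\<Sum>y\<in>B. b y))"
proof -
  define A where "A = (\<Sum>y\<in>B. a y)"
  define Bs where "Bs = (\<Sum>y\<in>B. b y)"
  have A: "A > 0" unfolding A_def using fin a ne by (intro sum_pos) auto
  have Bs: "Bs > 0" unfolding Bs_def using fin b ne by (intro sum_pos) auto
  have "(\<Sum>y\<in>B. a y * ln (a y / b y)) - A * ln (A / Bs) = (\<Sum>y\<in>B. a y * (ln (a y / b y) - ln (A / Bs)))"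
    by (simp add: A_def sum_distrib_right right_diff_distrib sum_subtractf)
  also have "\<dots> = (\<Sum>y\<in>B. a y * ln ((a y * Bs) / (b y * A)))"
  proof (rule sum.cong)
    fix y assume y: "y \<in> B"
    have "ln (a y / b y) - ln (A / Bs) = ln ((a y / b y) / (A / Bs))"
    proof -
      have "ln ((a y / b y) / (A / Bs)) = ln (a y / b y) - ln (A / Bs)"
        using a b A Bs y by (intro ln_divide_pos) auto
      then show ?thesis by simp
    qed
    also have "(a y / b y) / (A / Bs) = (a y * Bs) / (b y * A)" by (simp add: field_simps)
    finally show "a y * (ln (a y / b y) - ln (A / Bs)) = a y * ln ((a y * Bs) / (b y * A))" by simp
  qed simp
  also have "\<dots> \<ge> (\<Sum>y\<in>B. a y * (1 - 1 / ((a y * Bs) / (b y * A))))"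
  proof (rule sum_mono, rule mult_left_mono)
    fix y assume y: "y \<in> B"
    show "1 - 1 / ((a y * Bs) / (b y * A)) \<le> ln ((a y * Bs) / (b y * A))"
      using a b A Bs y by (intro ln_ge_1_minus_inv) auto
    show "0 \<le> a y" using a y by auto
  qed
  also have "(\<Sum>y\<in>B. a y * (1 - 1 / ((a y * Bs) / (b y * A)))) = (\<Sum>y\<in>B. a y - b y * (A / Bs))"
  proof (rule sum.cong)
    fix y assume y: "y \<in> B"
    show "a y * (1 - 1 / ((a y * Bs) / (b y * A))) = a y - b y * (A / Bs)"
    proof -
      have "a y \<noteq> 0" "b y \<noteq> 0" using a b y by auto
      then show ?thesis using A Bs by (simp add: field_simps)
    qed
  qed simp
  also have "\<dots> = (\<Sum>y\<in>B. a y) - (\<Sum>y\<in>B. b y) * (A / Bs)" by (simp only: sum_subtractf sum_distrib_right)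
  also have "\<dots> = A - Bs * (A / Bs)" by (simp only: A_def[symmetric] Bs_def[symmetric])
  also have "\<dots> = 0" using Bs by simp
  finally show ?thesis by (simp add: A_def Bs_def)
qed

lemma pinsker_binary:
  fixes p q :: real
  assumes q: "0 < q" and qp: "q \<le> p" and p1: "p < 1"
  shows "p * ln (p / q) + (1 - p) * ln ((1 - p) / (1 - q)) \<ge> 2 * (p - q)^2"
proof -
  have p: "p > 0" using q qp by simp
  define f where "f x = p * (ln p - ln x) + (1 - p) * (ln (1 - p) - ln (1 - x)) - 2 * (p - x)^2" for x
  have "f p \<le> f q"
  proof (rule DERIV_nonpos_imp_nonincreasing[OF qp])
    fix x assume x: "q \<le> x" "x \<le> p"
    have x0: "x > 0" and x1: "x < 1" using x q p1 by auto
    have D: "DERIV f x :> (- p / x + (1 - p) / (1 - x) + 4 * (p - x))"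
    proof -
      have x0': "x \<noteq> 0" and x1': "1 - x \<noteq> 0" "x - 1 \<noteq> 0" using x0 x1 by auto
      show ?thesis unfolding f_def using x0 x1 x0' x1' by (auto intro!: derivative_eq_intros)
    qed
    have e: "- p / x + (1 - p) / (1 - x) + 4 * (p - x) = (p - x) * (4 - 1 / (x * (1 - x)))"
      using x0 x1 by (simp add: field_simps)
    have xx: "x * (1 - x) \<le> 1 / 4"
    proof -
      have "0 \<le> (x - 1/2)^2" by simp
      then show ?thesis by (simp add: power2_eq_square algebra_simps)
    qed
    have xx0: "x * (1 - x) > 0" using x0 x1 by simp
    have "4 \<le> 1 / (x * (1 - x))" using xx xx0 by (simp add: le_divide_eq)
    then have "(p - x) * (4 - 1 / (x * (1 - x))) \<le> 0" using x by (intro mult_nonneg_nonpos) auto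
    with D e show "\<exists>y. DERIV f x :> y \<and> y \<le> 0" by auto
  qed
  moreover have "f p = 0" by (simp add: f_def)
  moreover have "f q = p * ln (p / q) + (1 - p) * ln ((1 - p) / (1 - q)) - 2 * (p - q)^2"
    using p q p1 qp by (simp add: f_def ln_div)
  ultimately show ?thesis by simp
qed

lemma sum_split_compl:
  fixes f :: "'a::finite \<Rightarrow> real"
  shows "(\<Sum>y\<in>UNIV. f y) = (\<Sum>y\<in>B. f y) + (\<Sum>y\<in>-B. f y)"
proof -
  have "(\<Sum>y\<in>UNIV. f y) = (\<Sum>y\<in>UNIV - B. f y) + (\<Sum>y\<in>B. f y)"
    by (rule sum.subset_diff) auto
  then show ?thesis by (simp add: Compl_eq_Diff_UNIV)
qed

lemma pinsker:
  fixes R S :: "'a::finite pmf"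
  assumes R: "\<And>y. pmf R y > 0" and S: "\<And>y. pmf S y > 0"
  shows "(\<Sum>y\<in>UNIV. pmf R y * ln (pmf R y / pmf S y)) \<ge> 2 * (tv_dist R S)^2"
proof -
  define B where "B = {y. pmf S y < pmf R y}"
  define p where "p = (\<Sum>y\<in>B. pmf R y)"
  define q where "q = (\<Sum>y\<in>B. pmf S y)"
  have sR: "(\<Sum>y\<in>UNIV. pmf R y) = 1" by (simp add: sum_pmf_eq_1)
  have sS: "(\<Sum>y\<in>UNIV. pmf S y) = 1" by (simp add: sum_pmf_eq_1)
  have cR: "(\<Sum>y\<in>-B. pmf R y) = 1 - p" using sum_split_compl[of "pmf R" B] sR by (simp add: p_def)
  have cS: "(\<Sum>y\<in>-B. pmf S y) = 1 - q" using sum_split_compl[of "pmf S" B] sS by (simp add: q_def)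
  have "(\<Sum>y\<in>UNIV. \<bar>pmf R y - pmf S y\<bar>) = (\<Sum>y\<in>B. \<bar>pmf R y - pmf S y\<bar>) + (\<Sum>y\<in>-B. \<bar>pmf R y - pmf S y\<bar>)"
    by (rule sum_split_compl)
  also have "(\<Sum>y\<in>B. \<bar>pmf R y - pmf S y\<bar>) = (\<Sum>y\<in>B. pmf R y - pmf S y)"
    by (rule sum.cong) (auto simp: B_def)
  also have "(\<Sum>y\<in>-B. \<bar>pmf R y - pmf S y\<bar>) = (\<Sum>y\<in>-B. pmf S y - pmf R y)"
    by (rule sum.cong) (auto simp: B_def)
  finally have "(\<Sum>y\<in>UNIV. \<bar>pmf R y - pmf S y\<bar>) = 2 * (p - q)"
    using cR cS by (simp add: sum_subtractf p_def q_def)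
  then have tv: "tv_dist R S = p - q" by (simp add: tv_dist_def)
  have KL: "(\<Sum>y\<in>UNIV. pmf R y * ln (pmf R y / pmf S y)) =
      (\<Sum>y\<in>B. pmf R y * ln (pmf R y / pmf S y)) + (\<Sum>y\<in>-B. pmf R y * ln (pmf R y / pmf S y))"
    by (rule sum_split_compl)
  show ?thesis
  proof (cases "B = {}")
    case True
    then have "p = 0" "q = 0" by (auto simp: p_def q_def)
    have "(\<Sum>y\<in>UNIV. pmf R y * ln (pmf R y / pmf S y)) \<ge> (\<Sum>y\<in>UNIV. pmf R y) * ln ((\<Sum>y\<in>UNIV. pmf R y) / (\<Sum>y\<in>UNIV. pmf S y))"
      by (rule log_sum) (use R S in auto)
    then show ?thesis using tv \<open>p = 0\<close> \<open>q = 0\<close> sR sS by simp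
  next
    case False
    have "-B \<noteq> {}"
    proof
      assume "-B = {}"
      then have "B = UNIV" by auto
      then have "(\<Sum>y\<in>UNIV. pmf S y) < (\<Sum>y\<in>UNIV. pmf R y)"
        by (intro sum_strict_mono) (auto simp: B_def)
      with sR sS show False by simp
    qed
    have q0: "q > 0" unfolding q_def using False S by (intro sum_pos) auto
    have qp: "q \<le> p" unfolding p_def q_def by (intro sum_mono) (auto simp: B_def)
    have "1 - p > 0" unfolding cR[symmetric] using \<open>-B \<noteq> {}\<close> R by (intro sum_pos) auto
    then have p1: "p < 1" by simp
    have "(\<Sum>y\<in>B. pmf R y * ln (pmf R y / pmf S y)) \<ge> p * ln (p / q)"
      unfolding p_def q_def by (rule log_sum) (use R S False in auto)
    moreover have "(\<Sum>y\<in>-B. pmf R y * ln (pmf R y / pmf S y)) \<ge> (1 - p) * ln ((1 - p) / (1 - q))"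
      unfolding cR[symmetric] cS[symmetric] by (rule log_sum) (use R S \<open>-B \<noteq> {}\<close> in auto)
    moreover have "p * ln (p / q) + (1 - p) * ln ((1 - p) / (1 - q)) \<ge> 2 * (p - q)^2"
      by (rule pinsker_binary[OF q0 qp p1])
    ultimately show ?thesis using KL tv by simp
  qed
qed

lemma bc_bound:
  fixes R S :: "'a::finite pmf"
  shows "(\<Sum>y\<in>UNIV. sqrt (pmf R y * pmf S y))^2 \<le> 1 - (tv_dist R S)^2"
proof -
  define a where "a y = sqrt (pmf R y)" for y
  define b where "b y = sqrt (pmf S y)" for y
  define BC where "BC = (\<Sum>y\<in>UNIV. a y * b y)"
  have a2: "(a y)^2 = pmf R y" for y by (simp add: a_def)
  have b2: "(b y)^2 = pmf S y" for y by (simp add: b_def)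
  have a0: "a y \<ge> 0" for y by (simp add: a_def)
  have b0: "b y \<ge> 0" for y by (simp add: b_def)
  have BCe: "(\<Sum>y\<in>UNIV. sqrt (pmf R y * pmf S y)) = BC"
    by (simp add: BC_def a_def b_def real_sqrt_mult)
  have sR: "(\<Sum>y\<in>UNIV. pmf R y) = 1" by (simp add: sum_pmf_eq_1)
  have sS: "(\<Sum>y\<in>UNIV. pmf S y) = 1" by (simp add: sum_pmf_eq_1)
  have absd: "\<bar>pmf R y - pmf S y\<bar> = \<bar>a y - b y\<bar> * (a y + b y)" for y
  proof -
    have "pmf R y - pmf S y = (a y - b y) * (a y + b y)"
      unfolding a2[symmetric] b2[symmetric] by (simp add: power2_eq_square algebra_simps)
    then show ?thesis using a0[of y] b0[of y] by (simp add: abs_mult)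
  qed
  have CS: "(\<Sum>y\<in>UNIV. \<bar>a y - b y\<bar> * (a y + b y))^2 \<le> (\<Sum>y\<in>UNIV. (\<bar>a y - b y\<bar>)^2) * (\<Sum>y\<in>UNIV. (a y + b y)^2)"
    by (rule Cauchy_Schwarz_ineq_sum)
  have s1: "(\<Sum>y\<in>UNIV. (\<bar>a y - b y\<bar>)^2) = 2 - 2 * BC"
  proof -
    have "(\<Sum>y\<in>UNIV. (\<bar>a y - b y\<bar>)^2) = (\<Sum>y\<in>UNIV. pmf R y + pmf S y - 2 * (a y * b y))"
      by (rule sum.cong) (auto simp: power2_abs power2_diff a2 b2)
    also have "\<dots> = 2 - 2 * BC" by (simp add: sum.distrib sum_subtractf sR sS BC_def sum_distrib_left)
    finally show ?thesis .
  qed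
  have s2: "(\<Sum>y\<in>UNIV. (a y + b y)^2) = 2 + 2 * BC"
  proof -
    have "(\<Sum>y\<in>UNIV. (a y + b y)^2) = (\<Sum>y\<in>UNIV. pmf R y + pmf S y + 2 * (a y * b y))"
      by (rule sum.cong) (auto simp: power2_sum a2 b2)
    also have "\<dots> = 2 + 2 * BC" by (simp add: sum.distrib sR sS BC_def sum_distrib_left)
    finally show ?thesis .
  qed
  have "(2 * tv_dist R S)^2 = (\<Sum>y\<in>UNIV. \<bar>a y - b y\<bar> * (a y + b y))^2"
    by (simp add: tv_dist_def absd)
  also have "\<dots> \<le> (2 - 2 * BC) * (2 + 2 * BC)" using CS s1 s2 by simp
  finally have "4 * (tv_dist R S)^2 \<le> 4 * (1 - BC^2)" by (simp add: power2_eq_square algebra_simps)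
  then show ?thesis using BCe by simp
qed

lemma tanh_half: "tanh ((\<epsilon>::real) / 2) = (exp \<epsilon> - 1) / (exp \<epsilon> + 1)"
proof -
  have "tanh (\<epsilon> / 2) = (1 - exp (- \<epsilon>)) / (1 + exp (- \<epsilon>))" by (simp add: tanh_real_altdef)
  also have "exp (- \<epsilon>) = 1 / exp \<epsilon>" by (rule exp_minus')
  also have gen: "(1 - 1 / X) / (1 + 1 / X) = (X - 1) / (X + 1)" if "X > 0" for X :: real
  proof -
    have X: "X \<noteq> 0" "X + 1 \<noteq> 0" using that by auto
    have "1 - 1 / X = (X - 1) / X" "1 + 1 / X = (X + 1) / X" using X by (simp_all add: field_simps)
    then show ?thesis using X by simp
  qed
  have "(1 - 1 / exp \<epsilon>) / (1 + 1 / exp \<epsilon>) = (exp \<epsilon> - 1) / (exp \<epsilon> + 1)" by (rule gen) simp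
  finally show ?thesis .
qed

lemma frac_le_cross: "(b::real) > 0 \<Longrightarrow> d > 0 \<Longrightarrow> a * d \<le> c * b \<Longrightarrow> a / b \<le> c / d"
  by (simp add: field_simps)

lemma key_deriv_bound:
  fixes E w :: real
  assumes E: "E > 1" and w: "w > 0"
  shows "E * w / (E * w + 1) - w / (w + E) \<le> (E - 1) / (E + 1)"
proof -
  have d1: "E * w + 1 > 0" "w + E > 0" "E + 1 > 0" using E w by (auto intro: add_pos_pos)
  have "E * w / (E * w + 1) - w / (w + E) = (E * w * (w + E) - (E * w + 1) * w) / ((E * w + 1) * (w + E))"
    using d1 by (subst diff_frac_eq) auto
  also have "\<dots> \<le> (E - 1) / (E + 1)"
  proof (rule frac_le_cross)
    show "(E * w + 1) * (w + E) > 0" "E + 1 > 0" using d1 by auto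
    have "(E - 1) * ((E * w + 1) * (w + E)) - (E * w * (w + E) - (E * w + 1) * w) * (E + 1)
          = (E - 1) * E * (w - 1)^2"
      by (simp add: algebra_simps power2_eq_square)
    moreover have "(E - 1) * E * (w - 1)^2 \<ge> 0" using E by simp
    ultimately show "(E * w * (w + E) - (E * w + 1) * w) * (E + 1) \<le> (E - 1) * ((E * w + 1) * (w + E))"
      by linarith
  qed
  finally show ?thesis .
qed

lemma G_lip:
  fixes E w1 w2 :: real
  assumes E: "E > 1" and w: "0 < w2" "w2 \<le> w1"
  shows "ln ((E * w1 + 1) / (w1 + E)) - ln ((E * w2 + 1) / (w2 + E)) \<le> (E - 1) / (E + 1) * (ln w1 - ln w2)"
proof -
  define t where "t = (E - 1) / (E + 1)"
  define h where "h z = t * z - (ln (E * exp z + 1) - ln (exp z + E))" for z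
  have "h (ln w2) \<le> h (ln w1)"
  proof (rule DERIV_nonneg_imp_nondecreasing[where f = h])
    show "ln w2 \<le> ln w1" using w by simp
    fix z :: real assume "ln w2 \<le> z" "z \<le> ln w1"
    have p1: "E * exp z + 1 > 0" "exp z + E > 0" using E by (auto intro: add_pos_pos)
    have g1: "((\<lambda>z. E * exp z + 1) has_real_derivative E * exp z) (at z)"
      by (auto intro!: derivative_eq_intros)
    have g2: "((\<lambda>z. exp z + E) has_real_derivative exp z) (at z)"
      by (auto intro!: derivative_eq_intros)
    have d1: "((\<lambda>z. ln (E * exp z + 1)) has_real_derivative 1 / (E * exp z + 1) * (E * exp z)) (at z)"
      by (rule DERIV_chain2[where f = ln, OF DERIV_ln_divide[OF p1(1)] g1])
    have d2: "((\<lambda>z. ln (exp z + E)) has_real_derivative 1 / (exp z + E) * exp z) (at z)"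
      by (rule DERIV_chain2[where f = ln, OF DERIV_ln_divide[OF p1(2)] g2])
    have d3: "((\<lambda>z. t * z) has_real_derivative t) (at z)"
      by (rule DERIV_cmult_Id)
    have D0: "DERIV h z :> t - (1 / (E * exp z + 1) * (E * exp z) - 1 / (exp z + E) * exp z)"
      unfolding h_def by (intro DERIV_diff d1 d2 d3)
    have D: "DERIV h z :> t - (E * exp z / (E * exp z + 1) - exp z / (exp z + E))"
      using D0 by simp
    have "E * exp z / (E * exp z + 1) - exp z / (exp z + E) \<le> t"
      unfolding t_def by (rule key_deriv_bound[OF E]) simp
    with D show "\<exists>y. DERIV h z :> y \<and> 0 \<le> y" by auto
  qed
  then have H: "t * ln w2 - (ln (E * w2 + 1) - ln (w2 + E)) \<le> t * ln w1 - (ln (E * w1 + 1) - ln (w1 + E))"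
    using w unfolding h_def by simp
  have e: "ln ((E * w + 1) / (w + E)) = ln (E * w + 1) - ln (w + E)" if "w > 0" for w
    using that E by (intro ln_divide_pos) (auto intro: add_pos_pos)
  have "t * (ln w1 - ln w2) = t * ln w1 - t * ln w2" by (simp add: right_diff_distrib)
  moreover have w1p: "w1 > 0" using w by simp
  ultimately show ?thesis unfolding t_def[symmetric] e[OF w(1)] e[OF w1p] using H w by linarith
qed

lemma contraction:
  fixes P0 P1 :: "'a::finite pmf" and E :: real
  assumes P0: "\<And>x. pmf P0 x > 0" and P1: "\<And>x. pmf P1 x > 0" and E: "E > 1"
  shows "ln ((1 + (E - 1) * pmf P1 y) / (1 + (E - 1) * pmf P0 y))
       - ln ((1 + (E - 1) * pmf P1 y') / (1 + (E - 1) * pmf P0 y'))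
       \<le> (E - 1) / (E + 1) * llr_span P0 P1"
proof -
  define c where "c = E - 1"
  have c: "c > 0" using E by (simp add: c_def)
  define L where "L x = ln (pmf P1 x / pmf P0 x)" for x
  define Mx where "Mx = Max (range L)"
  define mn where "mn = Min (range L)"
  define M where "M = exp Mx"
  define m where "m = exp mn"
  have span: "llr_span P0 P1 = ln M - ln m"
    by (simp add: llr_span_def M_def m_def Mx_def mn_def L_def)
  have LM: "L x \<le> Mx" "mn \<le> L x" for x
    unfolding Mx_def mn_def by (auto intro: Max_ge Min_le)
  have ratio: "pmf P1 x / pmf P0 x = exp (L x)" for x
    using P0[of x] P1[of x] by (simp add: L_def)
  have up: "pmf P1 x \<le> M * pmf P0 x" for x
  proof -
    have "pmf P1 x / pmf P0 x \<le> M" unfolding ratio M_def using LM(1)[of x] by simp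
    then show ?thesis using P0[of x] by (simp add: divide_le_eq)
  qed
  have lo: "m * pmf P0 x \<le> pmf P1 x" for x
  proof -
    have "m \<le> pmf P1 x / pmf P0 x" unfolding ratio m_def using LM(2)[of x] by simp
    then show ?thesis using P0[of x] by (simp add: le_divide_eq)
  qed
  have s0: "(\<Sum>x\<in>UNIV. pmf P0 x) = 1" and s1: "(\<Sum>x\<in>UNIV. pmf P1 x) = 1" by (simp_all add: sum_pmf_eq_1)
  have m0: "m > 0" and M0: "M > 0" by (simp_all add: m_def M_def)
  have cm: "1 - m = (\<Sum>x\<in>UNIV. pmf P1 x - m * pmf P0 x)"
    by (simp add: sum_subtractf sum_distrib_left[symmetric] s0 s1)
  have cM: "M - 1 = (\<Sum>x\<in>UNIV. M * pmf P0 x - pmf P1 x)"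
    by (simp add: sum_subtractf sum_distrib_left[symmetric] s0 s1)
  have "0 \<le> (\<Sum>x\<in>UNIV. pmf P1 x - m * pmf P0 x)" by (rule sum_nonneg) (use lo in auto)
  then have m1: "m \<le> 1" using cm by simp
  have "0 \<le> (\<Sum>x\<in>UNIV. M * pmf P0 x - pmf P1 x)" by (rule sum_nonneg) (use up in auto)
  then have M1: "1 \<le> M" using cM by simp
  have cony: "pmf P1 y - m * pmf P0 y \<le> 1 - m" for y
    unfolding cm by (rule member_le_sum) (use lo in \<open>auto simp: diff_ge_0_iff_ge\<close>)
  have conM: "M * pmf P0 y - pmf P1 y \<le> M - 1" for y
    unfolding cM by (rule member_le_sum) (use up in \<open>auto simp: diff_ge_0_iff_ge\<close>)
  let ?LQ = "\<lambda>y. ln ((1 + c * pmf P1 y) / (1 + c * pmf P0 y))"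
  have pos: "1 + c * pmf P1 y > 0" "1 + c * pmf P0 y > 0" for y
    using c P0[of y] P1[of y] by (auto intro: add_pos_pos)
  show ?thesis
  proof (cases "m = M")
    case True
    have eq: "pmf P1 x = pmf P0 x" for x
    proof -
      have "pmf P1 x = m * pmf P0 x" using up[of x] lo[of x] True by simp
      moreover have "m = 1" using m1 M1 True by simp
      ultimately show ?thesis by simp
    qed
    show ?thesis using True span by (simp add: eq)
  next
    case False
    have mM: "m < M" using False m1 M1 by simp
    have m1s: "m < 1"
    proof (rule ccontr)
      assume "\<not> m < 1"
      then have "m = 1" using m1 by simp
      have "pmf P1 x = pmf P0 x" for x
      proof (rule ccontr)
        assume ne: "pmf P1 x \<noteq> pmf P0 x"
        have "pmf P0 x < pmf P1 x" using lo[of x] \<open>m = 1\<close> ne by simp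
        then have "(\<Sum>x\<in>UNIV. pmf P0 x) < (\<Sum>x\<in>UNIV. pmf P1 x)"
          using lo \<open>m = 1\<close> by (intro sum_strict_mono_ex1) auto
        with s0 s1 show False by simp
      qed
      then have "L x = 0" for x by (simp add: L_def P0 less_imp_neq[OF P0, symmetric])
      then have "range L = {0}" by auto
      then have "M = 1" by (simp add: M_def Mx_def)
      with mM \<open>m = 1\<close> show False by simp
    qed
    have M1s: "1 < M"
    proof (rule ccontr)
      assume "\<not> 1 < M"
      then have "M = 1" using M1 by simp
      have "pmf P1 x = pmf P0 x" for x
      proof (rule ccontr)
        assume ne: "pmf P1 x \<noteq> pmf P0 x"
        have "pmf P1 x < pmf P0 x" using up[of x] \<open>M = 1\<close> ne by simp
        then have "(\<Sum>x\<in>UNIV. pmf P1 x) < (\<Sum>x\<in>UNIV. pmf P0 x)"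
          using up \<open>M = 1\<close> by (intro sum_strict_mono_ex1) auto
        with s0 s1 show False by simp
      qed
      then have "L x = 0" for x by (simp add: L_def less_imp_neq[OF P0, symmetric])
      then have "range L = {0}" by auto
      then have "m = 1" by (simp add: m_def mn_def)
      with mM \<open>M = 1\<close> show False by simp
    qed
    define al where "al = (1 - m) / (M - m)"
    define be where "be = (M - 1) / (M - m)"
    have al0: "al > 0" and be0: "be > 0" using m1s M1s mM by (simp_all add: al_def be_def)
    have Mm: "M - m \<noteq> 0" using mM by simp
    have "M * al + m * be = (M * (1 - m) + m * (M - 1)) / (M - m)"
      by (simp add: al_def be_def add_divide_distrib)
    also have "M * (1 - m) + m * (M - 1) = M - m" by (simp add: algebra_simps)
    finally have ab1: "M * al + m * be = 1" using Mm by simp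
    have "al + be = ((1 - m) + (M - 1)) / (M - m)"
      by (simp only: al_def be_def add_divide_distrib)
    also have "(1 - m) + (M - 1) = M - m" by simp
    finally have ab2: "al + be = 1" using Mm by simp
    define U where "U = (1 + c * M * al) / (1 + c * al)"
    define Lo where "Lo = (1 + c * m * be) / (1 + c * be)"
    have U0: "1 + c * al > 0" "1 + c * M * al > 0" using c al0 M0 by (auto intro: add_pos_pos)
    have L0: "1 + c * be > 0" "1 + c * m * be > 0" using c be0 m0 by (auto intro: add_pos_pos)
    have upper: "(1 + c * pmf P1 y) / (1 + c * pmf P0 y) \<le> U" for y
    proof (cases "pmf P0 y \<le> pmf P1 y")
      case True
      let ?a0 = "pmf P0 y" and ?a1 = "pmf P1 y"
      have k0: "(M - m) * (?a1 - ?a0) = (M - 1) * (?a1 - m * ?a0) + (1 - m) * (?a1 - M * ?a0)"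
        by (simp add: algebra_simps)
      have k1: "(M - 1) * (?a1 - m * ?a0) \<le> (M - 1) * (1 - m)"
        using M1 cony[of y] by (intro mult_left_mono) auto
      have k2: "(1 - m) * (?a1 - M * ?a0) \<le> 0"
        using m1 up[of y] by (intro mult_nonneg_nonpos) auto
      have e: "(M - m) * (al * (M - 1)) = (M - 1) * (1 - m)" using Mm by (simp add: al_def)
      have "(M - m) * (?a1 - ?a0) \<le> (M - m) * (al * (M - 1))"
        unfolding e using k0 k1 k2 by linarith
      then have k3: "?a1 - ?a0 \<le> al * (M - 1)" using mM by simp
      have k4: "c * al * (?a1 - M * ?a0) \<le> 0"
        using c al0 up[of y] by (intro mult_nonneg_nonpos) auto
      have id: "(1 + c * M * al) * (1 + c * ?a0) - (1 + c * ?a1) * (1 + c * al)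
              = c * (al * (M - 1) - (?a1 - ?a0)) - c * (c * al * (?a1 - M * ?a0))"
        by (simp add: algebra_simps)
      have "c * (al * (M - 1) - (?a1 - ?a0)) \<ge> 0" using c k3 by simp
      moreover have "c * (c * al * (?a1 - M * ?a0)) \<le> 0" using c k4 by (simp add: mult_nonneg_nonpos)
      ultimately have "(1 + c * ?a1) * (1 + c * al) \<le> (1 + c * M * al) * (1 + c * ?a0)"
        using id by linarith
      then show ?thesis unfolding U_def by (intro frac_le_cross pos U0)
    next
      case False
      have "(1 + c * pmf P1 y) / (1 + c * pmf P0 y) \<le> 1"
        using pos[of y] c False by simp
      also have "1 \<le> U" unfolding U_def using U0 M1 c al0 by simp
      finally show ?thesis .
    qed
    have lower: "Lo \<le> (1 + c * pmf P1 y) / (1 + c * pmf P0 y)" for y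
    proof (cases "pmf P1 y \<le> pmf P0 y")
      case True
      let ?a0 = "pmf P0 y" and ?a1 = "pmf P1 y"
      have k0: "(M - m) * (?a0 - ?a1) = (1 - m) * (M * ?a0 - ?a1) + (M - 1) * (m * ?a0 - ?a1)"
        by (simp add: algebra_simps)
      have k1: "(1 - m) * (M * ?a0 - ?a1) \<le> (1 - m) * (M - 1)"
        using m1 conM[of y] by (intro mult_left_mono) auto
      have k2: "(M - 1) * (m * ?a0 - ?a1) \<le> 0"
        using M1 lo[of y] by (intro mult_nonneg_nonpos) auto
      have e: "(M - m) * (be * (1 - m)) = (1 - m) * (M - 1)" using Mm by (simp add: be_def)
      have "(M - m) * (?a0 - ?a1) \<le> (M - m) * (be * (1 - m))"
        unfolding e using k0 k1 k2 by linarith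
      then have k3: "?a0 - ?a1 \<le> be * (1 - m)" using mM by simp
      have k4: "c * be * (?a1 - m * ?a0) \<ge> 0"
        using c be0 lo[of y] by simp
      have id: "(1 + c * ?a1) * (1 + c * be) - (1 + c * m * be) * (1 + c * ?a0)
              = c * (be * (1 - m) - (?a0 - ?a1)) + c * (c * be * (?a1 - m * ?a0))"
        by (simp add: algebra_simps)
      have "c * (be * (1 - m) - (?a0 - ?a1)) \<ge> 0" using c k3 by simp
      moreover have "c * (c * be * (?a1 - m * ?a0)) \<ge> 0" using c k4 by simp
      ultimately have "(1 + c * m * be) * (1 + c * ?a0) \<le> (1 + c * ?a1) * (1 + c * be)"
        using id by linarith
      then show ?thesis unfolding Lo_def by (intro frac_le_cross pos L0)
    next
      case False
      have "Lo \<le> 1" unfolding Lo_def using L0 m1 c be0 by simp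
      also have "1 \<le> (1 + c * pmf P1 y) / (1 + c * pmf P0 y)"
        using pos[of y] c False by simp
      finally show ?thesis .
    qed
    have "?LQ y \<le> ln U" using upper[of y] pos[of y] by (intro ln_mono) auto
    moreover have "ln Lo \<le> ?LQ y'" using lower[of y'] L0 by (intro ln_mono) (auto simp: Lo_def)
    ultimately have step1: "?LQ y - ?LQ y' \<le> ln U - ln Lo" by simp
    define w1 where "w1 = M * al / (m * be)"
    define w2 where "w2 = al / be"
    have w2: "w2 > 0" using al0 be0 by (simp add: w2_def)
    have w1e: "w1 = (M / m) * w2" unfolding w1_def w2_def by (simp add: times_divide_times_eq)
    have "1 \<le> M / m" using m0 m1 M1 by simp
    then have w12: "w2 \<le> w1" unfolding w1e using w2 mult_right_mono[of 1 "M / m" w2] by simp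
    have Ec: "E = 1 + c" by (simp add: c_def)
    have g1: "(E * w1 + 1) / (w1 + E) = (1 + c * M * al) / (1 + c * m * be)"
    proof -
      have d: "m * be \<noteq> 0" using m0 be0 by simp
      have n1: "E * w1 + 1 = (E * M * al + m * be) / (m * be)"
        unfolding w1_def using d by (simp add: add_divide_distrib)
      have n2: "w1 + E = (M * al + E * m * be) / (m * be)"
        unfolding w1_def using d by (simp add: add_divide_distrib)
      have "(E * w1 + 1) / (w1 + E) = (E * M * al + m * be) / (M * al + E * m * be)"
        unfolding n1 n2 using d by simp
      also have "E * M * al + m * be = 1 + c * M * al" using ab1 Ec by (simp add: algebra_simps)
      also have "M * al + E * m * be = 1 + c * m * be" using ab1 Ec by (simp add: algebra_simps)
      finally show ?thesis .
    qed
    have g2: "(E * w2 + 1) / (w2 + E) = (1 + c * al) / (1 + c * be)"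
    proof -
      have d: "be \<noteq> 0" using be0 by simp
      have n1: "E * w2 + 1 = (E * al + be) / be"
        unfolding w2_def using d by (simp add: add_divide_distrib)
      have n2: "w2 + E = (al + E * be) / be"
        unfolding w2_def using d by (simp add: add_divide_distrib)
      have "(E * w2 + 1) / (w2 + E) = (E * al + be) / (al + E * be)"
        unfolding n1 n2 using d by simp
      also have "E * al + be = 1 + c * al" using ab2 Ec by (simp add: algebra_simps)
      also have "al + E * be = 1 + c * be" using ab2 Ec by (simp add: algebra_simps)
      finally show ?thesis .
    qed
    have "ln U - ln Lo = ln ((E * w1 + 1) / (w1 + E)) - ln ((E * w2 + 1) / (w2 + E))"
      unfolding g1 g2 U_def Lo_def using U0 L0 by (simp add: ln_divide_pos)
    also have "\<dots> \<le> (E - 1) / (E + 1) * (ln w1 - ln w2)"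
      by (rule G_lip[OF E w2 w12])
    also have "ln w1 - ln w2 = ln M - ln m"
      unfolding w1_def w2_def using al0 be0 m0 M0 by (simp add: ln_divide_pos ln_mult)
    finally show ?thesis using step1 span by (simp add: c_def)
  qed
qed

lemma llr_abs:
  fixes a0 a1 E :: real
  assumes E: "E \<ge> 1" and a: "0 \<le> a0" "a0 \<le> 1" "0 \<le> a1" "a1 \<le> 1"
  shows "\<bar>ln ((1 + (E - 1) * a1) / (1 + (E - 1) * a0))\<bar> \<le> ln E"
proof -
  have gen: "ln ((1 + (E - 1) * b1) / (1 + (E - 1) * b0)) \<le> ln E"
    if "0 \<le> b0" "b0 \<le> 1" "0 \<le> b1" "b1 \<le> 1" for b0 b1 :: real
  proof -
    have p0: "1 + (E - 1) * b0 \<ge> 1" "1 + (E - 1) * b1 \<ge> 1" using E that by auto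
    have "1 + (E - 1) * b1 \<le> E" using E that mult_left_mono[of b1 1 "E - 1"] by simp
    also have "E \<le> E * (1 + (E - 1) * b0)" using E p0 by simp
    finally have "(1 + (E - 1) * b1) / (1 + (E - 1) * b0) \<le> E" using p0 by (simp add: divide_le_eq)
    moreover have "(1 + (E - 1) * b1) / (1 + (E - 1) * b0) > 0" using p0 by simp
    ultimately show ?thesis by simp
  qed
  have "ln ((1 + (E - 1) * a1) / (1 + (E - 1) * a0)) = - ln ((1 + (E - 1) * a0) / (1 + (E - 1) * a1))"
    using E a by (simp add: ln_divide_pos add_pos_nonneg)
  then show ?thesis using gen[of a0 a1] gen[of a1 a0] a by linarith
qed

lemma sqrt_lemma:
  fixes a b :: real
  assumes a: "a > 0" and b: "b > 0"
  shows "a * exp (ln (b / a) / 2) = sqrt (a * b)"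
proof -
  have "exp (ln (b / a) / 2) = (b / a) powr (1 / 2)"
    using a b by (simp add: powr_def)
  also have "\<dots> = sqrt (b / a)" using a b by (simp add: powr_half_sqrt)
  also have "\<dots> = sqrt b / sqrt a" by (simp add: real_sqrt_divide)
  finally have "a * exp (ln (b / a) / 2) = a * (sqrt b / sqrt a)" by simp
  also have "\<dots> = sqrt a * sqrt b"
  proof -
    have sa: "sqrt a \<noteq> 0" using a by simp
    have h: "sqrt a * sqrt a = a" using a by simp
    have "a * (sqrt b / sqrt a) = (sqrt a * sqrt a) * (sqrt b / sqrt a)" by (simp only: h)
    also have "\<dots> = sqrt a * (sqrt a * (sqrt b / sqrt a))" by (simp only: mult.assoc)
    also have "sqrt a * (sqrt b / sqrt a) = sqrt b" using sa by simp
    finally show ?thesis .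
  qed
  also have "\<dots> = sqrt (a * b)" by (simp add: real_sqrt_mult)
  finally show ?thesis .
qed

lemma sumR:
  assumes "m \<le> Suc n - k"
  shows "(\<Sum>j<m. f ([k..<Suc n] ! j)) = (\<Sum>i\<in>{k..<k+m}. f i)"
proof -
  have "(\<Sum>j<m. f ([k..<Suc n] ! j)) = (\<Sum>j<m. f (j + k))"
    by (rule sum.cong) (use assms in \<open>auto simp del: upt_Suc simp: nth_upt add.commute\<close>)
  also have "\<dots> = (\<Sum>i\<in>{k..<m+k}. f i)"
    using sum.shift_bounds_nat_ivl[of f 0 k m] by (simp add: lessThan_atLeast0)
  finally show ?thesis by (simp add: add.commute)
qed

lemma sumL:
  assumes "m \<le> k - 1"
  shows "(\<Sum>j<m. f (rev [1..<k] ! j)) = (\<Sum>i\<in>{k-m..<k}. f i)"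
proof -
  define g where "g i = f (k - m + i)" for i
  have "(\<Sum>j<m. f (rev [1..<k] ! j)) = (\<Sum>j<m. g (m - Suc j))"
  proof (rule sum.cong)
    fix j assume j: "j \<in> {..<m}"
    then have "rev [1..<k] ! j = [1..<k] ! (k - 1 - Suc j)" using assms by (simp add: rev_nth)
    also have "\<dots> = k - Suc j" using j assms by simp
    finally show "f (rev [1..<k] ! j) = g (m - Suc j)" using j assms by (simp add: g_def)
  qed simp
  also have "\<dots> = (\<Sum>i<m. g i)" by (rule sum.nat_diff_reindex)
  also have "\<dots> = (\<Sum>i\<in>{k-m..<m+(k-m)}. f i)"
    using sum.shift_bounds_nat_ivl[of f 0 "k - m" m] by (simp add: lessThan_atLeast0 g_def add.commute)
  also have "m + (k - m) = k" using assms by simp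
  finally show ?thesis by simp
qed

lemma sum_split_ivl:
  fixes F :: "nat \<Rightarrow> real"
  assumes "k1 \<le> k2" "k2 \<le> Suc n"
  shows "(\<Sum>i\<in>{k1..n}. F i) = (\<Sum>i\<in>{k1..<k2}. F i) + (\<Sum>i\<in>{k2..n}. F i)"
proof -
  have "(\<Sum>i\<in>{k1..<k2}. F i) + (\<Sum>i\<in>{k2..<Suc n}. F i) = (\<Sum>i\<in>{k1..<Suc n}. F i)"
    by (rule sum.atLeastLessThan_concat) (use assms in auto)
  then show ?thesis by (simp add: atLeastLessThanSuc_atLeastAtMost)
qed

theorem theorem5p6:
  fixes P0 P1 :: "'a::finite pmf" and \<epsilon> :: real and n kstar \<alpha> :: nat
    and khat :: "(nat \<Rightarrow> 'a) \<Rightarrow> nat"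
  assumes supp0: "set_pmf P0 = UNIV" and supp1: "set_pmf P1 = UNIV"
    and eps: "\<epsilon> > 0" and n: "n > 1" and kstar: "1 < kstar" "kstar \<le> n"
    and alpha: "1 \<le> \<alpha>" "\<alpha> \<le> n"
    and khat_argmax: "\<And>y. khat y \<in> {1..n} \<and>
                         (\<forall>k\<in>{1..n}. cpd_score \<epsilon> P0 P1 n y k \<le> cpd_score \<epsilon> P0 P1 n y (khat y))"
  shows "ldp_mechanism \<epsilon> (rr \<epsilon> :: 'a \<Rightarrow> 'a pmf) \<and>
    (let \<beta>r = measure_pmf.prob (privatize n (rr \<epsilon>) (cp_data n kstar P0 P1))
                 {y. khat y \<notin> {kstar - \<alpha> .. kstar + \<alpha>}};
         s = llr_span P0 P1;
         sr = min (2 * \<epsilon>) (tanh (\<epsilon> / 2) * s);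
         Cr = 2 * ((exp \<epsilon> - 1) / (exp \<epsilon> + real CARD('a) - 1))^2 * (tv_dist P0 P1)^2;
         istar = \<lceil>log 2 ((real n - 1) / real \<alpha>)\<rceil>
     in \<beta>r \<le> 2 * min (\<Sum>i\<in>{1..nat istar}. exp (- (2 ^ (i - 1) * real \<alpha> * Cr^2) / sr^2))
                      ((1 - Cr / 2) powr (real \<alpha> / 2)))"
proof -
  have ldp: "ldp_mechanism \<epsilon> (rr \<epsilon> :: 'a \<Rightarrow> 'a pmf)" by (rule rr_ldp[OF eps])
  define E where "E = exp \<epsilon>"
  have E1: "E > 1" using eps by (simp add: E_def)
  define N where "N = exp \<epsilon> + real CARD('a) - 1"
  have N: "N > 0" unfolding N_def by (rule N_pos)
  define Q0 where "Q0 = bind_pmf P0 (rr \<epsilon>)"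
  define Q1 where "Q1 = bind_pmf P1 (rr \<epsilon>)"
  have P0pos: "pmf P0 x > 0" for x using supp0 by (intro pmf_positive) auto
  have P1pos: "pmf P1 x > 0" for x using supp1 by (intro pmf_positive) auto
  have Q0e: "pmf Q0 y = (1 + (E - 1) * pmf P0 y) / N" for y
    unfolding Q0_def rr_out_pmf(1) rr_out_pmf(2) E_def N_def ..
  have Q1e: "pmf Q1 y = (1 + (E - 1) * pmf P1 y) / N" for y
    unfolding Q1_def rr_out_pmf(1) rr_out_pmf(2) E_def N_def ..
  have num_pos: "1 + (E - 1) * pmf P y > 0" for P :: "'a pmf" and y
  proof -
    have "(E - 1) * pmf P y \<ge> 0" using E1 by simp
    then show ?thesis by simp
  qed
  have Q0pos: "pmf Q0 y > 0" for y unfolding Q0e by (intro divide_pos_pos num_pos N)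
  have Q1pos: "pmf Q1 y > 0" for y unfolding Q1e by (intro divide_pos_pos num_pos N)
  define lr where "lr y = ln (pmf Q1 y / pmf Q0 y)" for y
  have lre: "lr y = ln ((1 + (E - 1) * pmf P1 y) / (1 + (E - 1) * pmf P0 y))" for y
    unfolding lr_def Q0e Q1e using N by simp
  have score: "cpd_score \<epsilon> P0 P1 n y k = (\<Sum>i\<in>{k..n}. lr (y i))" for y k
    by (simp add: cpd_score_def lr_def Q0_def Q1_def rr_out_pmf(1)[symmetric])
  define p where "p = (\<lambda>i. if i < kstar then Q0 else Q1)"
  define D where "D = privatize n (rr \<epsilon>) (cp_data n kstar P0 P1)"
  have D: "D = Pi_pmf {1..n} undefined p"
    unfolding D_def Q0_def Q1_def p_def by (rule privatize_eq)
  define isR where "isR = [kstar..<Suc n]"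
  define isL where "isL = rev [1..<kstar]"
  define ER where "ER = {y. \<exists>m. Suc \<alpha> \<le> m \<and> m \<le> length isR \<and> (\<Sum>j<m. lr (y (isR!j))) \<le> 0}"
  define EL where "EL = {y. \<exists>m. Suc \<alpha> \<le> m \<and> m \<le> length isL \<and> (\<Sum>j<m. (\<lambda>v. - lr v) (y (isL!j))) \<le> 0}"
  have lenR: "length isR = Suc n - kstar" using kstar by (simp add: isR_def Suc_diff_le)
  have lenL: "length isL = kstar - 1" by (simp add: isL_def)
  have Rd: "distinct isR" "set isR \<subseteq> {1..n}" "\<forall>i\<in>set isR. p i = Q1"
    using kstar by (auto simp: isR_def p_def)
  have Ld: "distinct isL" "set isL \<subseteq> {1..n}" "\<forall>i\<in>set isL. p i = Q0"
    using kstar by (auto simp: isL_def p_def)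

  have incl: "{y. khat y \<notin> {kstar - \<alpha>..kstar + \<alpha>}} \<subseteq> ER \<union> EL"
  proof
    fix y assume "y \<in> {y. khat y \<notin> {kstar - \<alpha>..kstar + \<alpha>}}"
    then have out: "khat y \<notin> {kstar - \<alpha>..kstar + \<alpha>}" by simp
    define k where "k = khat y"
    have k: "k \<in> {1..n}" and opt: "\<forall>k'\<in>{1..n}. cpd_score \<epsilon> P0 P1 n y k' \<le> cpd_score \<epsilon> P0 P1 n y k"
      using khat_argmax[of y] by (auto simp: k_def)
    have sk: "(\<Sum>i\<in>{kstar..n}. lr (y i)) \<le> (\<Sum>i\<in>{k..n}. lr (y i))"
      using opt kstar by (auto simp: score)
    from out have "k < kstar - \<alpha> \<or> kstar + \<alpha> < k" by (auto simp: k_def)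
    then show "y \<in> ER \<union> EL"
    proof
      assume kl: "k < kstar - \<alpha>"
      define m where "m = kstar - k"
      have m: "Suc \<alpha> \<le> m" "m \<le> length isL" using kl k kstar by (auto simp: m_def lenL)
      have km: "kstar - m = k" using kl by (simp add: m_def)
      have split: "(\<Sum>i\<in>{k..n}. lr (y i)) = (\<Sum>i\<in>{k..<kstar}. lr (y i)) + (\<Sum>i\<in>{kstar..n}. lr (y i))"
        by (rule sum_split_ivl) (use kl kstar in auto)
      have "(\<Sum>j<m. (\<lambda>v. - lr v) (y (isL!j))) = (\<Sum>i\<in>{kstar - m..<kstar}. - lr (y i))"
        unfolding isL_def by (rule sumL) (use m lenL in auto)
      also have "\<dots> = - (\<Sum>i\<in>{k..<kstar}. lr (y i))" by (simp add: km sum_negf)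
      finally have "(\<Sum>j<m. (\<lambda>v. - lr v) (y (isL!j))) \<le> 0" using sk split by simp
      then have "y \<in> EL" unfolding EL_def using m by blast
      then show ?thesis by simp
    next
      assume kr: "kstar + \<alpha> < k"
      define m where "m = k - kstar"
      have m: "Suc \<alpha> \<le> m" "m \<le> length isR" using kr k kstar by (auto simp: m_def lenR)
      have split: "(\<Sum>i\<in>{kstar..n}. lr (y i)) = (\<Sum>i\<in>{kstar..<k}. lr (y i)) + (\<Sum>i\<in>{k..n}. lr (y i))"
        by (rule sum_split_ivl) (use kr k in auto)
      have "(\<Sum>j<m. lr (y (isR!j))) = (\<Sum>i\<in>{kstar..<kstar + m}. lr (y i))"
        unfolding isR_def by (rule sumR) (use m lenR in auto)
      also have "kstar + m = k" using kr by (simp add: m_def)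
      finally have "(\<Sum>j<m. lr (y (isR!j))) \<le> 0" using sk split by simp
      then have "y \<in> ER" unfolding ER_def using m by blast
      then show ?thesis by simp
    qed
  qed
  have beta_le: "measure_pmf.prob D {y. khat y \<notin> {kstar - \<alpha>..kstar + \<alpha>}}
      \<le> measure_pmf.prob D ER + measure_pmf.prob D EL"
  proof -
    have "measure_pmf.prob D {y. khat y \<notin> {kstar - \<alpha>..kstar + \<alpha>}} \<le> measure_pmf.prob D (ER \<union> EL)"
      by (rule measure_pmf.finite_measure_mono[OF incl]) simp
    also have "\<dots> \<le> measure_pmf.prob D ER + measure_pmf.prob D EL"
      by (rule measure_Un_le) simp_all
    finally show ?thesis .
  qed

  define s where "s = llr_span P0 P1"
  define sr where "sr = min (2 * \<epsilon>) (tanh (\<epsilon> / 2) * s)"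
  define Cr where "Cr = 2 * ((exp \<epsilon> - 1) / (exp \<epsilon> + real CARD('a) - 1))^2 * (tv_dist P0 P1)^2"
  define istar where "istar = \<lceil>log 2 ((real n - 1) / real \<alpha>)\<rceil>"
  define A where "A = (\<Sum>i\<in>{1..nat istar}. exp (- (2 ^ (i - 1) * real \<alpha> * Cr^2) / sr^2))"
  define B where "B = (1 - Cr / 2) powr (real \<alpha> / 2)"

  have tvQ: "tv_dist Q0 Q1 = ((E - 1) / N) * tv_dist P0 P1"
  proof -
    have "\<bar>pmf Q0 y - pmf Q1 y\<bar> = ((E - 1) / N) * \<bar>pmf P0 y - pmf P1 y\<bar>" for y
    proof -
      have "pmf Q0 y - pmf Q1 y = ((E - 1) / N) * (pmf P0 y - pmf P1 y)"
        unfolding Q0e Q1e by (simp add: diff_divide_distrib[symmetric] algebra_simps)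
      moreover have "(E - 1) / N \<ge> 0" using E1 N by simp
      ultimately show ?thesis using E1 N by (simp add: abs_mult abs_of_pos)
    qed
    then show ?thesis by (simp add: tv_dist_def sum_distrib_left mult.commute)
  qed
  have Cr_eq: "Cr = 2 * (tv_dist Q0 Q1)^2"
    unfolding Cr_def tvQ E_def N_def by (simp add: power_divide power_mult_distrib)
  have tv_sym: "tv_dist Q1 Q0 = tv_dist Q0 Q1"
    by (simp add: tv_dist_def abs_minus_commute)
  have Cr0: "Cr \<ge> 0" unfolding Cr_eq by simp

  define BC where "BC = (\<Sum>y\<in>UNIV. sqrt (pmf Q0 y * pmf Q1 y))"
  have BC2: "BC^2 \<le> 1 - Cr / 2" unfolding BC_def Cr_eq using bc_bound[of Q0 Q1] by simp
  have BC0: "BC > 0" unfolding BC_def using Q0pos Q1pos by (intro sum_pos) auto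
  have BC1: "BC \<le> 1"
  proof (rule power2_le_imp_le)
    show "BC^2 \<le> 1^2" using BC2 Cr0 by simp
  qed simp
  have rhoR: "(\<Sum>v\<in>UNIV. pmf Q1 v * exp (- lr v / 2)) = BC"
    unfolding BC_def
  proof (rule sum.cong)
    fix v
    have "- lr v = ln (pmf Q0 v / pmf Q1 v)"
      using Q0pos[of v] Q1pos[of v] by (simp add: lr_def ln_divide_pos)
    then have "pmf Q1 v * exp (- lr v / 2) = sqrt (pmf Q1 v * pmf Q0 v)"
      using sqrt_lemma[OF Q1pos[of v] Q0pos[of v]] by simp
    then show "pmf Q1 v * exp (- lr v / 2) = sqrt (pmf Q0 v * pmf Q1 v)" by (simp add: mult.commute)
  qed simp
  have rhoL: "(\<Sum>v\<in>UNIV. pmf Q0 v * exp (- (- lr v) / 2)) = BC"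
    unfolding BC_def
  proof (rule sum.cong)
    fix v
    show "pmf Q0 v * exp (- (- lr v) / 2) = sqrt (pmf Q0 v * pmf Q1 v)"
      using sqrt_lemma[OF Q0pos[of v] Q1pos[of v]] by (simp add: lr_def)
  qed simp
  have BCpow: "BC ^ Suc \<alpha> \<le> B"
  proof -
    have "BC ^ Suc \<alpha> \<le> BC ^ \<alpha>" using BC0 BC1 by (intro power_decreasing) auto
    also have "BC ^ \<alpha> = (BC^2) powr (real \<alpha> / 2)"
    proof -
      have "BC^2 = BC powr 2" using BC0 by (subst powr_realpow[symmetric, of BC 2]) auto
      then have "(BC^2) powr (real \<alpha> / 2) = BC powr (real \<alpha>)" by (simp add: powr_powr)
      also have "\<dots> = BC ^ \<alpha>" using BC0 by (simp add: powr_realpow)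
      finally show ?thesis by simp
    qed
    also have "\<dots> \<le> B" unfolding B_def using BC2 by (intro powr_mono2) auto
    finally show ?thesis .
  qed
  have PR_B: "measure_pmf.prob D ER \<le> B"
  proof -
    have "measure_pmf.prob D ER \<le> (\<Sum>v\<in>UNIV. pmf Q1 v * exp (- lr v / 2)) ^ Suc \<alpha>"
      unfolding D ER_def by (rule tail_B) (use Rd rhoR BC1 in auto)
    then show ?thesis using BCpow rhoR by simp
  qed
  have PL_B: "measure_pmf.prob D EL \<le> B"
  proof -
    have "measure_pmf.prob D EL \<le> (\<Sum>v\<in>UNIV. pmf Q0 v * exp (- (- lr v) / 2)) ^ Suc \<alpha>"
      unfolding D EL_def by (rule tail_B) (use Ld rhoL BC1 in auto)
    then show ?thesis using BCpow rhoL by simp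
  qed

  define lo where "lo = Min (range lr)"
  define hi where "hi = Max (range lr)"
  have bnd: "lo \<le> lr v \<and> lr v \<le> hi" for v unfolding lo_def hi_def by (auto intro: Min_le Max_ge)
  have labs: "\<bar>lr y\<bar> \<le> \<epsilon>" for y
  proof -
    have "\<bar>lr y\<bar> \<le> ln E" unfolding lre
      using E1 P0pos[of y] P1pos[of y] pmf_le_1[of P0 y] pmf_le_1[of P1 y] by (intro llr_abs) auto
    then show ?thesis by (simp add: E_def)
  qed
  have contr: "lr y - lr y' \<le> tanh (\<epsilon> / 2) * s" for y y'
    unfolding lre s_def tanh_half E_def[symmetric] by (rule contraction[OF P0pos P1pos E1])
  have range: "hi - lo \<le> sr"
  proof -
    have "hi \<in> range lr" unfolding hi_def by (rule Max_in) auto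
    then obtain y1 where y1: "hi = lr y1" by auto
    have "lo \<in> range lr" unfolding lo_def by (rule Min_in) auto
    then obtain y2 where y2: "lo = lr y2" by auto
    have "hi - lo \<le> 2 * \<epsilon>" using labs[of y1] labs[of y2] y1 y2 by linarith
    moreover have "hi - lo \<le> tanh (\<epsilon> / 2) * s" using contr[of y1 y2] y1 y2 by simp
    ultimately show ?thesis by (simp add: sr_def)
  qed
  have sr0: "sr \<ge> 0" using range bnd[of undefined] by linarith
  define T1 where "T1 = exp (- (2 ^ (1 - 1) * real \<alpha> * Cr^2) / sr^2)"
  have mu1: "(\<Sum>v\<in>UNIV. pmf Q1 v * lr v) \<ge> Cr"
    using pinsker[of Q1 Q0, OF Q1pos Q0pos] unfolding Cr_eq tv_sym by (simp add: lr_def)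
  have mu0: "(\<Sum>v\<in>UNIV. pmf Q0 v * (- lr v)) \<ge> Cr"
  proof -
    have "- lr v = ln (pmf Q0 v / pmf Q1 v)" for v
      using Q0pos[of v] Q1pos[of v] by (simp add: lr_def ln_divide_pos)
    then show ?thesis using pinsker[of Q0 Q1, OF Q0pos Q1pos] unfolding Cr_eq by simp
  qed
  have expbound: "exp (- 2 * real (Suc \<alpha>) * \<mu>^2 / sr^2) \<le> T1" if "\<mu> \<ge> Cr" for \<mu>
  proof (cases "sr = 0")
    case True
    then show ?thesis by (simp add: T1_def)
  next
    case False
    then have sr2: "sr^2 > 0" using sr0 by simp
    have "Cr^2 \<le> \<mu>^2" using that Cr0 by (intro power_mono) auto
    then have "real \<alpha> * Cr^2 \<le> 2 * real (Suc \<alpha>) * \<mu>^2"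
      using mult_mono[of "real \<alpha>" "2 * real (Suc \<alpha>)" "Cr^2" "\<mu>^2"] by simp
    then have "real \<alpha> * Cr^2 / sr^2 \<le> 2 * real (Suc \<alpha>) * \<mu>^2 / sr^2"
      using sr2 by (intro divide_right_mono) auto
    moreover have "- 2 * real (Suc \<alpha>) * \<mu>^2 / sr^2 = - (2 * real (Suc \<alpha>) * \<mu>^2 / sr^2)" by (simp only: mult_minus_left minus_divide_left)
    moreover have "- (2 ^ (1 - 1) * real \<alpha> * Cr^2) / sr^2 = - (real \<alpha> * Cr^2 / sr^2)" by simp
    ultimately have "- 2 * real (Suc \<alpha>) * \<mu>^2 / sr^2 \<le> - (2 ^ (1 - 1) * real \<alpha> * Cr^2) / sr^2" by linarith
    then show ?thesis unfolding T1_def by simp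
  qed
  have PR_T: "measure_pmf.prob D ER \<le> T1"
  proof (cases "sr = 0")
    case True
    then show ?thesis by (simp add: T1_def measure_pmf.prob_le_1)
  next
    case False
    then have srp: "sr > 0" using sr0 by simp
    have "measure_pmf.prob D ER \<le> exp (- 2 * real (Suc \<alpha>) * (\<Sum>v\<in>UNIV. pmf Q1 v * lr v)^2 / sr^2)"
      unfolding D ER_def by (rule tail_A[where lo = lo and hi = hi]) (use Rd bnd range srp mu1 Cr0 in auto)
    also have "\<dots> \<le> T1" by (rule expbound[OF mu1])
    finally show ?thesis .
  qed
  have PL_T: "measure_pmf.prob D EL \<le> T1"
  proof (cases "sr = 0")
    case True
    then show ?thesis by (simp add: T1_def measure_pmf.prob_le_1)
  next
    case False
    then have srp: "sr > 0" using sr0 by simp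
    have "measure_pmf.prob D EL \<le> exp (- 2 * real (Suc \<alpha>) * (\<Sum>v\<in>UNIV. pmf Q0 v * (- lr v))^2 / sr^2)"
      unfolding D EL_def by (rule tail_A[where lo = "- hi" and hi = "- lo"]) (use Ld bnd range srp mu0 Cr0 in auto)
    also have "\<dots> \<le> T1" by (rule expbound[OF mu0])
    finally show ?thesis .
  qed
  have PA: "measure_pmf.prob D ER \<le> A \<and> measure_pmf.prob D EL \<le> A"
  proof (cases "nat istar = 0")
    case False
    then have "1 \<in> {1..nat istar}" by auto
    then have "T1 \<le> A" unfolding A_def T1_def by (rule member_le_sum) auto
    then show ?thesis using PR_T PL_T by simp
  next
    case True
    then have "istar \<le> 0" by simp
    then have "log 2 ((real n - 1) / real \<alpha>) \<le> 0" unfolding istar_def by simp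
    moreover have "(real n - 1) / real \<alpha> > 0" using n alpha by simp
    ultimately have "(real n - 1) / real \<alpha> \<le> 1" by simp
    then have "real n - 1 \<le> real \<alpha>" using alpha by (simp add: divide_le_eq)
    then have na: "n - 1 \<le> \<alpha>" using n by linarith
    have "ER = {}" unfolding ER_def lenR using na kstar by auto
    moreover have "EL = {}" unfolding EL_def lenL using na kstar by auto
    moreover have "A \<ge> 0" unfolding A_def by (intro sum_nonneg) auto
    ultimately show ?thesis by simp
  qed
  have final: "measure_pmf.prob D {y. khat y \<notin> {kstar - \<alpha>..kstar + \<alpha>}} \<le> 2 * min A B"
    using beta_le PA PR_B PL_B by linarith
  show ?thesis
    unfolding Let_def using ldp final
    by (simp only: D_def A_def B_def sr_def s_def Cr_def istar_def)
qed

end
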